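(* Let $k\geq 2$ and let $H$ be a maximal outerplanar graph of order $2k$ whose Hamiltonian cycle bounding the outer face is $a_1a_2\cdots a_{2k}a_1$. Let $G_H$ be the graph obtained from $H$ by adding $k$ new vertices $u_1,\dots,u_k$ and the $2k$ new edges $u_ia_{2i-1}$, $u_ia_{2i}$ for $i=1,\dots,k$. Then $G_H$ is a maximal outerplanar graph of order $n=3k$ with exactly $t=k$ vertices of degree $2$, and $\gamma_{\times 2}(G_H)=\frac{2n}{3}=\frac{n+t}{2}=n-t$. *)

theory Defs
  imports Complex_Main
begin

definition simple_graph :: "'a set \<Rightarrow> 'a set set \<Rightarrow> bool" where
  "simple_graph V E \<longleftrightarrow> finite V \<and> (\<forall>e\<in>E. \<exists>x y. x \<noteq> y \<and> x \<in> V \<and> y \<in> V \<and> e = {x, y})"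

definition nbhd :: "'a set set \<Rightarrow> 'a \<Rightarrow> 'a set" where
  "nbhd E v = {w. {v, w} \<in> E}"

definition degree :: "'a set set \<Rightarrow> 'a \<Rightarrow> nat" where
  "degree E v = card (nbhd E v)"

text \<open>Two chords of a convex polygon, given by the positions of their endpoints,
  cross iff their endpoints strictly interleave.\<close>
definition chords_cross :: "nat set \<Rightarrow> nat set \<Rightarrow> bool" where
  "chords_cross S T \<longleftrightarrow>
     (\<exists>i j k l. S = {i, j} \<and> T = {k, l} \<and> i < k \<and> k < j \<and> j < l)"

text \<open>The vertices placed on a circle (outer face) in the order given by the injective
  position map f, all edges drawn as straight chords, and no two edges cross.\<close>
definition outerplanar_wrt :: "'a set \<Rightarrow> 'a set set \<Rightarrow> ('a \<Rightarrow> nat) \<Rightarrow> bool" where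
  "outerplanar_wrt V E f \<longleftrightarrow> inj_on f V \<and>
     (\<forall>e\<in>E. \<forall>e'\<in>E. \<not> chords_cross (f ` e) (f ` e'))"

definition outerplanar :: "'a set \<Rightarrow> 'a set set \<Rightarrow> bool" where
  "outerplanar V E \<longleftrightarrow> simple_graph V E \<and> (\<exists>f. outerplanar_wrt V E f)"

definition maximal_outerplanar :: "'a set \<Rightarrow> 'a set set \<Rightarrow> bool" where
  "maximal_outerplanar V E \<longleftrightarrow> outerplanar V E \<and>
     (\<forall>x\<in>V. \<forall>y\<in>V. x \<noteq> y \<and> {x, y} \<notin> E \<longrightarrow> \<not> outerplanar V (insert {x, y} E))"

definition double_dominating :: "'a set \<Rightarrow> 'a set set \<Rightarrow> 'a set \<Rightarrow> bool" where
  "double_dominating V E D \<longleftrightarrow> D \<subseteq> V \<and>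
     (\<forall>v\<in>V. card (insert v (nbhd E v) \<inter> D) \<ge> 2)"

definition double_domination_number :: "'a set \<Rightarrow> 'a set set \<Rightarrow> nat" where
  "double_domination_number V E = (LEAST c. \<exists>D. double_dominating V E D \<and> card D = c)"

text \<open>The graph G_H: old vertices Inl x, new vertices u_i = Inr i (i = 1..k),
  u_i adjacent to a_(2i-1) and a_(2i).\<close>
definition GH_vertices :: "nat \<Rightarrow> 'a set \<Rightarrow> ('a + nat) set" where
  "GH_vertices k V = Inl ` V \<union> Inr ` {1..k}"

definition GH_edges :: "nat \<Rightarrow> (nat \<Rightarrow> 'a) \<Rightarrow> 'a set set \<Rightarrow> ('a + nat) set set" where
  "GH_edges k a E = (image Inl) ` E
     \<union> {{Inr i, Inl (a (2*i - 1))} | i. i \<in> {1..k}}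
     \<union> {{Inr i, Inl (a (2*i))} | i. i \<in> {1..k}}"

end

theory Submission imports Defs begin

definition inb :: "('b \<Rightarrow> nat) \<Rightarrow> 'b \<Rightarrow> 'b \<Rightarrow> 'b \<Rightarrow> bool" where
  "inb f x y z \<longleftrightarrow> min (f x) (f y) < f z \<and> f z < max (f x) (f y)"

lemma cc_char: "chords_cross {a,b} {c,d} \<longleftrightarrow> (min a b < min c d \<and> min c d < max a b \<and> max a b < max c d)"
proof
  assume "chords_cross {a,b} {c,d}"
  then obtain i j k l where h: "{a,b} = {i,j}" "{c,d}={k,l}" "i<k" "k<j" "j<l" by (auto simp: chords_cross_def)
  then show "min a b < min c d \<and> min c d < max a b \<and> max a b < max c d"
    by (auto simp: doubleton_eq_iff)
next
  assume h: "min a b < min c d \<and> min c d < max a b \<and> max a b < max c d"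
  have "{a,b} = {min a b, max a b}" "{c,d} = {min c d, max c d}" by (auto simp: min_def max_def)
  then show "chords_cross {a,b} {c,d}" unfolding chords_cross_def using h by blast
qed

lemma adj_nc1: "b = Suc a \<or> a = Suc b \<Longrightarrow> \<not> chords_cross {a,b} T"
  unfolding chords_cross_def by (auto simp: doubleton_eq_iff)
lemma adj_nc2: "b = Suc a \<or> a = Suc b \<Longrightarrow> \<not> chords_cross T {a,b}"
  unfolding chords_cross_def by (auto simp: doubleton_eq_iff)

lemma nc_adj: "\<exists>c. S = {c, Suc c} \<or> S = {Suc c, c} \<Longrightarrow> \<not> chords_cross S T \<and> \<not> chords_cross T S"
  using adj_nc1 adj_nc2 by blast

lemma cc_double: "chords_cross {2*a,2*b} {2*c,2*(d::nat)} \<longleftrightarrow> chords_cross {a,b} {c,d}"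
  by (simp add: cc_char min_def max_def)

lemma nc:
  assumes "outerplanar_wrt W F f" "{x,y}\<in>F" "{z,w}\<in>F" "x\<in>W" "y\<in>W" "z\<in>W" "w\<in>W"
    "x\<noteq>y" "z\<noteq>w" "x\<noteq>z" "x\<noteq>w" "y\<noteq>z" "y\<noteq>w"
  shows "inb f x y z = inb f x y w"
proof -
  have inj: "inj_on f W" using assms(1) by (simp add: outerplanar_wrt_def)
  have d: "f x \<noteq> f y" "f z \<noteq> f w" "f x \<noteq> f z" "f x \<noteq> f w" "f y \<noteq> f z" "f y \<noteq> f w"
    using inj assms(4-13) by (meson inj_onD)+
  have "\<not> chords_cross (f`{x,y}) (f`{z,w})" "\<not> chords_cross (f`{z,w}) (f`{x,y})"
    using assms(1-3) unfolding outerplanar_wrt_def by blast+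
  then have "\<not> chords_cross {f x, f y} {f z, f w}" "\<not> chords_cross {f z, f w} {f x, f y}" by auto
  then show ?thesis using d unfolding cc_char inb_def by (auto simp: min_def max_def split: if_splits)
qed

lemma final_arith:
  fixes P U Q Y :: nat
  assumes "P\<noteq>U" "P\<noteq>Q" "P\<noteq>Y" "U\<noteq>Q" "U\<noteq>Y" "Q\<noteq>Y"
   "(min U P < Y \<and> Y < max U P) = (min U P < Q \<and> Q < max U P)"
   "(min U Q < Y \<and> Y < max U Q) = (min U Q < P \<and> P < max U Q)"
   "(min U Y < P \<and> P < max U Y) = (min U Y < Q \<and> Q < max U Y)"
  shows False
  using assms by (auto simp: min_def max_def split: if_splits)

lemma chain_up:
  assumes "P (h l)" "l \<le> m" "\<And>t. l \<le> t \<Longrightarrow> t < m \<Longrightarrow> P (h t) \<Longrightarrow> P (h (Suc t))"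
  shows "P (h m)"
  using assms(2,3)
proof (induction m)
  case 0 then show ?case using assms(1) by simp
next
  case (Suc m)
  show ?case
  proof (cases "l = Suc m")
    case True then show ?thesis using assms(1) by simp
  next
    case False then show ?thesis using Suc by simp
  qed
qed

lemma chain_down:
  assumes "P (h r)" "m \<le> r" "\<And>t. m \<le> t \<Longrightarrow> t < r \<Longrightarrow> P (h (Suc t)) \<Longrightarrow> P (h t)"
  shows "P (h m)"
proof -
  have "\<forall>m. r - m = d \<longrightarrow> m \<le> r \<longrightarrow> (\<forall>t. m \<le> t \<longrightarrow> t < r \<longrightarrow> P (h (Suc t)) \<longrightarrow> P (h t)) \<longrightarrow> P (h m)" for d
  proof (induction d)
    case 0 then show ?case using assms(1) by auto
  next
    case (Suc d)
    show ?case
    proof (intro allI impI)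
      fix m assume a: "r - m = Suc d" "m \<le> r" "\<forall>t. m \<le> t \<longrightarrow> t < r \<longrightarrow> P (h (Suc t)) \<longrightarrow> P (h t)"
      then have "P (h (Suc m))" using Suc.IH[rule_format, of "Suc m"] by auto
      then show "P (h m)" using a by auto
    qed
  qed
  then show ?thesis using assms by blast
qed


locale ghl =
  fixes k :: nat and V :: "'a set" and E :: "'a set set" and a :: "nat \<Rightarrow> 'a"
  assumes k2: "k \<ge> 2" and mo: "maximal_outerplanar V E" and inja: "inj_on a {1..2*k}"
    and Va: "a ` {1..2*k} = V" and cyc: "\<forall>i\<in>{1..<2*k}. {a i, a (Suc i)} \<in> E"
    and cycl: "{a (2*k), a 1} \<in> E" and opw: "outerplanar_wrt V E (inv_into {1..2*k} a)"
begin

abbreviation "VV \<equiv> GH_vertices k V"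
abbreviation "EE \<equiv> GH_edges k a E"
abbreviation "g \<equiv> inv_into {1..2*k} a"

lemma simpH: "simple_graph V E" using mo by (simp add: maximal_outerplanar_def outerplanar_def)
lemma finV: "finite V" using simpH by (simp add: simple_graph_def)
lemma cardV: "card V = 2*k" using card_image[OF inja] Va by simp
lemma ainV: "j \<in> {1..2*k} \<Longrightarrow> a j \<in> V" using Va by blast
lemma ginv: "j \<in> {1..2*k} \<Longrightarrow> g (a j) = j" using inv_into_f_f[OF inja] by blast
lemma aeq: "i \<in> {1..2*k} \<Longrightarrow> j \<in> {1..2*k} \<Longrightarrow> a i = a j \<longleftrightarrow> i = j"
  using inja by (meson inj_onD)
lemma Vex: "v \<in> V \<Longrightarrow> \<exists>j\<in>{1..2*k}. v = a j" using Va by blast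
lemma Eold: "e \<in> E \<Longrightarrow> Inl ` e \<in> EE" by (simp add: GH_edges_def)
lemma Enew1: "i \<in> {1..k} \<Longrightarrow> {Inr i, Inl (a (2*i-1))} \<in> EE" by (auto simp: GH_edges_def)
lemma Enew2: "i \<in> {1..k} \<Longrightarrow> {Inr i, Inl (a (2*i))} \<in> EE" by (auto simp: GH_edges_def)
lemma Ecases: "e \<in> EE \<Longrightarrow> (\<exists>x y. {x,y} \<in> E \<and> x \<in> V \<and> y \<in> V \<and> x \<noteq> y \<and> e = {Inl x, Inl y}) \<or>
   (\<exists>i\<in>{1..k}. e = {Inr i, Inl (a (2*i-1))} \<or> e = {Inr i, Inl (a (2*i))})"
  using simpH unfolding GH_edges_def simple_graph_def by fastforce
lemma cyc1: "1 \<le> t \<Longrightarrow> t < 2*k \<Longrightarrow> {Inl (a t), Inl (a (Suc t))} \<in> EE"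
  using Eold[of "{a t, a (Suc t)}"] cyc by auto
lemma cyc2: "{Inl (a (2*k)), Inl (a 1)} \<in> EE"
  using Eold[OF cycl] by auto
lemma cardVV: "card VV = 3*k"
proof -
  have "card VV = card (Inl ` V :: ('a + nat) set) + card (Inr ` {1..k} :: ('a + nat) set)"
    unfolding GH_vertices_def using finV by (subst card_Un_disjoint) auto
  also have "\<dots> = 3 * k" using cardV by (simp add: card_image)
  finally show ?thesis .
qed
lemma finVV: "finite VV" using finV by (simp add: GH_vertices_def)


definition "ff = case_sum (\<lambda>v. 2 * g v) (\<lambda>i. 4*i - 1)"

lemma ainV2: "i \<in> {1..k} \<Longrightarrow> a (2*i-1) \<in> V \<and> a (2*i) \<in> V" proof -
  assume i: "i \<in> {1..k}"
  then have "2*i-1 \<in> {1..2*k}" "2*i \<in> {1..2*k}" by auto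
  then show ?thesis using ainV by blast
qed

lemma ff_img: "e \<in> EE \<Longrightarrow> (\<exists>x y. {x,y} \<in> E \<and> ff ` e = {2 * g x, 2 * g y}) \<or>
   (\<exists>c. ff ` e = {c, Suc c} \<or> ff ` e = {Suc c, c})"
proof -
  assume "e \<in> EE"
  then consider (o) x y where "{x,y} \<in> E" "e = {Inl x, Inl y}"
    | (n1) i where "i\<in>{1..k}" "e = {Inr i, Inl (a (2*i-1))}"
    | (n2) i where "i\<in>{1..k}" "e = {Inr i, Inl (a (2*i))}"
    using Ecases by blast
  then show ?thesis
  proof cases
    case o
    then have "ff ` e = {2 * g x, 2 * g y}" by (simp add: ff_def)
    then show ?thesis using o by blast
  next
    case n1
    then have "2*i-1 \<in> {1..2*k}" by auto
    then have "g (a (2*i-1)) = 2*i-1" using ginv by blast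
    then have "ff ` e = {Suc (4*i-2), 4*i-2}" using n1 by (auto simp: ff_def)
    then show ?thesis by blast
  next
    case n2
    then have "g (a (2*i)) = 2*i" using ginv[of "2*i"] by auto
    then have "ff ` e = {4*i-1, Suc (4*i-1)}" using n2 by (auto simp: ff_def)
    then show ?thesis by blast
  qed
qed

lemma op_GH: "outerplanar VV EE"
  unfolding outerplanar_def
proof
  show "simple_graph VV EE"
    unfolding simple_graph_def
  proof
    show "finite VV" by (rule finVV)
    show "\<forall>e\<in>EE. \<exists>x y. x \<noteq> y \<and> x \<in> VV \<and> y \<in> VV \<and> e = {x, y}"
    proof
      fix e assume "e \<in> EE"
      then consider (o) x y where "{x,y} \<in> E" "x \<in> V" "y \<in> V" "x \<noteq> y" "e = {Inl x, Inl y}"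
        | (n) i where "i\<in>{1..k}" "e = {Inr i, Inl (a (2*i-1))} \<or> e = {Inr i, Inl (a (2*i))}"
        using Ecases by blast
      then show "\<exists>x y. x \<noteq> y \<and> x \<in> VV \<and> y \<in> VV \<and> e = {x, y}"
      proof cases
        case o then show ?thesis unfolding GH_vertices_def by blast
      next
        case n then show ?thesis using ainV2[OF n(1)] unfolding GH_vertices_def by blast
      qed
    qed
  qed
  show "\<exists>f. outerplanar_wrt VV EE f"
  proof (intro exI[of _ ff])
    have ginj: "inj_on g V" using inj_on_inv_into[of V a "{1..2*k}"] Va by simp
    have "inj_on ff VV"
    proof (rule inj_onI)
      fix x y assume xy: "x \<in> VV" "y \<in> VV" "ff x = ff y"
      show "x = y"
      proof (cases x)
        case (Inl v) note xv = this
        show ?thesis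
        proof (cases y)
          case (Inl w)
          have vw: "v \<in> V" "w \<in> V" using xv Inl xy unfolding GH_vertices_def by auto
          have "2 * g v = 2 * g w" using xv Inl xy(3) by (simp add: ff_def)
          then have "g v = g w" by simp
          then have "v = w" using ginj vw by (meson inj_onD)
          then show ?thesis using xv Inl by simp
        next
          case (Inr j) then have j1: "j \<ge> 1" using xy unfolding GH_vertices_def by auto
          have "2 * g v = 4 * j - 1" using xv Inr xy(3) by (simp add: ff_def)
          then have False using j1 by presburger
          then show ?thesis ..
        qed
      next
        case (Inr i) note xi = this
        then have i1: "i \<ge> 1" using xy unfolding GH_vertices_def by auto
        show ?thesis
        proof (cases y)
          case (Inl w)
          have "2 * g w = 4 * i - 1" using xi Inl xy(3) by (simp add: ff_def)
          then have False using i1 by presburger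
          then show ?thesis ..
        next
          case (Inr j) then have "j \<ge> 1" using xy unfolding GH_vertices_def by auto
          have "4 * i - 1 = 4 * j - 1" using xi Inr xy(3) by (simp add: ff_def)
          then have "i = j" using i1 \<open>j \<ge> 1\<close> by simp
          then show ?thesis using xi Inr by simp
        qed
      qed
    qed
    moreover have "\<not> chords_cross (ff ` e) (ff ` e')" if ee: "e \<in> EE" "e' \<in> EE" for e e'
    proof -
      note A = ff_img[OF ee(1)] and B = ff_img[OF ee(2)]
      show ?thesis
      proof (cases "\<exists>c. ff ` e = {c, Suc c} \<or> ff ` e = {Suc c, c}")
        case True then show ?thesis using nc_adj by blast
      next
        case F1: False
        show ?thesis
        proof (cases "\<exists>c. ff ` e' = {c, Suc c} \<or> ff ` e' = {Suc c, c}")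
          case True then show ?thesis using nc_adj by blast
        next
          case False
          obtain x y where oo1: "{x,y} \<in> E" "ff ` e = {2 * g x, 2 * g y}" using A F1 by blast
          obtain z w where oo2: "{z,w} \<in> E" "ff ` e' = {2 * g z, 2 * g w}" using B False by blast
          have "\<not> chords_cross (g ` {x,y}) (g ` {z,w})" using opw oo1(1) oo2(1) unfolding outerplanar_wrt_def by blast
          then have "\<not> chords_cross {g x, g y} {g z, g w}" by simp
          then have "\<not> chords_cross {2 * g x, 2 * g y} {2 * g z, 2 * g w}" using cc_double by blast
          then show ?thesis using oo1 oo2 by simp
        qed
      qed
    qed
    ultimately show "outerplanar_wrt VV EE ff" unfolding outerplanar_wrt_def by blast
  qed
qed


lemma old_nonmax:
  assumes "x \<in> V" "y \<in> V" "x \<noteq> y" "{Inl x, Inl y} \<notin> EE"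
    "outerplanar VV (insert {Inl x, Inl y} EE)"
  shows False
proof -
  have nE: "{x,y} \<notin> E"
  proof
    assume "{x,y} \<in> E"
    then have "Inl ` {x,y} \<in> EE" by (rule Eold)
    then show False using assms(4) by simp
  qed
  obtain f where f: "outerplanar_wrt VV (insert {Inl x, Inl y} EE) f"
    using assms(5) unfolding outerplanar_def by blast
  have injf: "inj_on f VV" using f unfolding outerplanar_wrt_def by simp
  have ncf: "\<forall>e\<in>insert {Inl x, Inl y} EE. \<forall>e'\<in>insert {Inl x, Inl y} EE. \<not> chords_cross (f ` e) (f ` e')"
    using f unfolding outerplanar_wrt_def by simp
  have sg: "simple_graph V (insert {x, y} E)"
    using simpH assms(1-3) unfolding simple_graph_def by (metis insert_iff)
  have sub: "Inl ` V \<subseteq> VV" unfolding GH_vertices_def by blast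
  have inj2: "inj_on (f \<circ> Inl) V"
    by (rule comp_inj_on[OF inj_on_subset[OF inj_Inl subset_UNIV] inj_on_subset[OF injf sub]])
  have nc2: "\<not> chords_cross ((f \<circ> Inl) ` e) ((f \<circ> Inl) ` e')" if ee: "e \<in> insert {x,y} E" "e' \<in> insert {x,y} E" for e e'
  proof -
    have m: "Inl ` e \<in> insert {Inl x, Inl y} EE" if "e \<in> insert {x,y} E" for e
    proof (cases "e = {x,y}")
      case True then show ?thesis by simp
    next
      case False then have "e \<in> E" using that by simp
      then show ?thesis using Eold by simp
    qed
    have "\<not> chords_cross (f ` (Inl ` e)) (f ` (Inl ` e'))" using ncf m[OF ee(1)] m[OF ee(2)] by blast
    then show ?thesis by (simp add: image_comp)
  qed
  have "outerplanar V (insert {x,y} E)"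
    unfolding outerplanar_def outerplanar_wrt_def using sg inj2 nc2 by blast
  moreover have "\<forall>x\<in>V. \<forall>y\<in>V. x \<noteq> y \<and> {x,y} \<notin> E \<longrightarrow> \<not> outerplanar V (insert {x,y} E)"
    using mo unfolding maximal_outerplanar_def by (rule conjunct2)
  ultimately show False using assms(1-3) nE by blast
qed

lemma hinj: "t \<in> {1..2*k} \<Longrightarrow> s \<in> {1..2*k} \<Longrightarrow> (Inl (a t) :: 'a + nat) = Inl (a s) \<longleftrightarrow> t = s"
  using aeq by simp

lemma new_nonmax:
  assumes i: "i \<in> {1..k}" and y: "y \<in> VV" "y \<noteq> Inr i" "y \<noteq> Inl (a (2*i-1))" "y \<noteq> Inl (a (2*i))"
    and f: "outerplanar_wrt VV (insert {Inr i, y} EE) f"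
  shows False
proof -
  define F where "F = insert {Inr i, y} EE"
  define h :: "nat \<Rightarrow> 'a + nat" where "h t = Inl (a t)" for t
  define u :: "'a + nat" where "u = Inr i"
  define p where "p = h (2*i-1)"
  define q where "q = h (2*i)"
  have f': "outerplanar_wrt VV F f" using f F_def by simp
  have EF: "EE \<subseteq> F" unfolding F_def by blast
  have ir: "2*i-1 \<in> {1..2*k}" "2*i \<in> {1..2*k}" "Suc (2*i-1) = 2*i" using i by auto
  have hV: "t \<in> {1..2*k} \<Longrightarrow> h t \<in> VV" for t using ainV unfolding h_def GH_vertices_def by blast
  have uV: "u \<in> VV" using i unfolding u_def GH_vertices_def by blast
  have hu: "h t \<noteq> u" for t unfolding h_def u_def by simp
  have hh: "t \<in> {1..2*k} \<Longrightarrow> s \<in> {1..2*k} \<Longrightarrow> h t = h s \<longleftrightarrow> t = s" for t s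
    unfolding h_def using hinj by blast
  have pV: "p \<in> VV" "q \<in> VV" using hV ir unfolding p_def q_def by auto
  have pq: "p \<noteq> q" using hh ir unfolding p_def q_def by auto
  have up: "{u,p} \<in> F" "{u,q} \<in> F" using Enew1[OF i] Enew2[OF i] EF unfolding u_def p_def q_def h_def by auto
  have pqE: "{p,q} \<in> F" using cyc1[of "2*i-1"] ir EF unfolding p_def q_def h_def by auto
  have uy: "{u,y} \<in> F" unfolding F_def u_def by simp
  have cstep: "inb f c d (h t) = inb f c d (h (Suc t))"
    if "1 \<le> t" "t < 2*k" "{c,d} \<in> F" "c \<in> VV" "d \<in> VV" "c \<noteq> d" "h t \<noteq> c" "h t \<noteq> d"
       "h (Suc t) \<noteq> c" "h (Suc t) \<noteq> d" for t c d
  proof -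
    have "{h t, h (Suc t)} \<in> F" using cyc1[OF that(1,2)] EF unfolding h_def by auto
    moreover have "h t \<noteq> h (Suc t)" using hh[of t "Suc t"] that(1,2) by simp
    moreover have "h t \<in> VV" "h (Suc t) \<in> VV" using hV that(1,2) by auto
    ultimately show ?thesis using nc[OF f' that(3)] that by blast
  qed
  have cwrap: "inb f c d (h (2*k)) = inb f c d (h 1)"
    if "{c,d} \<in> F" "c \<in> VV" "d \<in> VV" "c \<noteq> d" "h (2*k) \<noteq> c" "h (2*k) \<noteq> d"
       "h 1 \<noteq> c" "h 1 \<noteq> d" for c d
  proof -
    have "{h (2*k), h 1} \<in> F" using cyc2 EF unfolding h_def by auto
    moreover have "h (2*k) \<noteq> h 1" using hh[of "2*k" 1] k2 by simp
    moreover have "h (2*k) \<in> VV" "h 1 \<in> VV" using hV k2 by auto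
    ultimately show ?thesis using nc[OF f' that(1)] that by blast
  qed
  have hp: "t \<in> {1..2*k} \<Longrightarrow> t \<noteq> 2*i-1 \<Longrightarrow> h t \<noteq> p" for t unfolding p_def using hh ir by blast
  have hq: "t \<in> {1..2*k} \<Longrightarrow> t \<noteq> 2*i \<Longrightarrow> h t \<noteq> q" for t unfolding q_def using hh ir by blast
  have up_ne: "u \<noteq> p" "u \<noteq> q" using hu unfolding p_def q_def by metis+
  have sP1: "inb f u p (h t) = inb f u p (h (Suc t))" if "1 \<le> t" "t < 2*k" "t \<noteq> 2*i-1" "Suc t \<noteq> 2*i-1" for t
  proof -
    have tt: "t \<in> {1..2*k}" "Suc t \<in> {1..2*k}" using that by auto
    show ?thesis by (rule cstep[OF that(1,2) up(1) uV pV(1) up_ne(1) hu hp[OF tt(1) that(3)] hu hp[OF tt(2) that(4)]])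
  qed
  have sP2: "inb f u q (h t) = inb f u q (h (Suc t))" if "1 \<le> t" "t < 2*k" "t \<noteq> 2*i" "Suc t \<noteq> 2*i" for t
  proof -
    have tt: "t \<in> {1..2*k}" "Suc t \<in> {1..2*k}" using that by auto
    show ?thesis by (rule cstep[OF that(1,2) up(2) uV pV(2) up_ne(2) hu hq[OF tt(1) that(3)] hu hq[OF tt(2) that(4)]])
  qed
  have kk: "2*k \<in> {1..2*k}" "(1::nat) \<in> {1..2*k}" using k2 by auto
  have wP1: "inb f u p (h (2*k)) = inb f u p (h 1)" if "2*k \<noteq> 2*i-1" "1 \<noteq> 2*i-1"
    by (rule cwrap[OF up(1) uV pV(1) up_ne(1) hu hp[OF kk(1) that(1)] hu hp[OF kk(2) that(2)]])
  have wP2: "inb f u q (h (2*k)) = inb f u q (h 1)" if "2*k \<noteq> 2*i" "1 \<noteq> 2*i"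
    by (rule cwrap[OF up(2) uV pV(2) up_ne(2) hu hq[OF kk(1) that(1)] hu hq[OF kk(2) that(2)]])
  define P1 where "P1 w \<longleftrightarrow> inb f u p w = inb f u p q" for w
  define P2 where "P2 w \<longleftrightarrow> inb f u q w = inb f u q p" for w
  have old: "P1 (h j) \<and> P2 (h j)" if j: "j \<in> {1..2*k}" "j \<noteq> 2*i-1" "j \<noteq> 2*i" for j
  proof (cases "j > 2*i")
    case True
    have a1: "P1 (h j)"
    proof (rule chain_up[where l = "2*i"])
      show "P1 (h (2*i))" unfolding P1_def q_def by simp
      show "2*i \<le> j" using True by simp
      fix t assume t: "2*i \<le> t" "t < j" "P1 (h t)"
      have "inb f u p (h t) = inb f u p (h (Suc t))"
        using t j True i by (intro sP1) auto
      then show "P1 (h (Suc t))" using t(3) unfolding P1_def by simp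
    qed
    have b1: "P2 (h 1)"
    proof (rule chain_down[where r = "2*i-1"])
      show "P2 (h (2*i-1))" unfolding P2_def p_def by simp
      show "1 \<le> 2*i-1" using ir by simp
      fix t assume t: "1 \<le> t" "t < 2*i-1" "P2 (h (Suc t))"
      have "inb f u q (h t) = inb f u q (h (Suc t))"
        using t j True i by (intro sP2) auto
      then show "P2 (h t)" using t(3) unfolding P2_def by simp
    qed
    have b2: "P2 (h (2*k))"
    proof -
      have "inb f u q (h (2*k)) = inb f u q (h 1)"
        using j True i k2 by (intro wP2) auto
      then show ?thesis using b1 unfolding P2_def by simp
    qed
    have b3: "P2 (h j)"
    proof (rule chain_down[where r = "2*k"])
      show "P2 (h (2*k))" by (rule b2)
      show "j \<le> 2*k" using j by simp
      fix t assume t: "j \<le> t" "t < 2*k" "P2 (h (Suc t))"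
      have "inb f u q (h t) = inb f u q (h (Suc t))"
        using t j True i by (intro sP2) auto
      then show "P2 (h t)" using t(3) unfolding P2_def by simp
    qed
    show ?thesis using a1 b3 by simp
  next
    case False
    then have jl: "j < 2*i-1" using j by simp
    have a1: "P2 (h j)"
    proof (rule chain_down[where r = "2*i-1"])
      show "P2 (h (2*i-1))" unfolding P2_def p_def by simp
      show "j \<le> 2*i-1" using jl by simp
      fix t assume t: "j \<le> t" "t < 2*i-1" "P2 (h (Suc t))"
      have "inb f u q (h t) = inb f u q (h (Suc t))"
        using t j jl i by (intro sP2) auto
      then show "P2 (h t)" using t(3) unfolding P2_def by simp
    qed
    have b1: "P1 (h (2*k))"
    proof (rule chain_up[where l = "2*i"])
      show "P1 (h (2*i))" unfolding P1_def q_def by simp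
      show "2*i \<le> 2*k" using i by simp
      fix t assume t: "2*i \<le> t" "t < 2*k" "P1 (h t)"
      have "inb f u p (h t) = inb f u p (h (Suc t))"
        using t j jl i by (intro sP1) auto
      then show "P1 (h (Suc t))" using t(3) unfolding P1_def by simp
    qed
    have b2: "P1 (h 1)"
    proof -
      have "inb f u p (h (2*k)) = inb f u p (h 1)"
        using j jl i k2 by (intro wP1) auto
      then show ?thesis using b1 unfolding P1_def by simp
    qed
    have b3: "P1 (h j)"
    proof (rule chain_up[where l = 1])
      show "P1 (h 1)" by (rule b2)
      show "1 \<le> j" using j by simp
      fix t assume t: "1 \<le> t" "t < j" "P1 (h t)"
      have "inb f u p (h t) = inb f u p (h (Suc t))"
        using t j jl i by (intro sP1) auto
      then show "P1 (h (Suc t))" using t(3) unfolding P1_def by simp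
    qed
    show ?thesis using a1 b3 by simp
  qed
  have yP: "P1 y \<and> P2 y \<and> y \<noteq> u \<and> y \<noteq> p \<and> y \<noteq> q"
  proof -
    have ynu: "y \<noteq> u" "y \<noteq> p" "y \<noteq> q" using y unfolding u_def p_def q_def h_def by auto
    consider (o) c where "c \<in> V" "y = Inl c" | (n) i' where "i' \<in> {1..k}" "y = Inr i'"
      using y unfolding GH_vertices_def by blast
    then show ?thesis
    proof cases
      case o
      then obtain j where jj: "j \<in> {1..2*k}" "c = a j" using Vex by blast
      then have yh: "y = h j" using o unfolding h_def by simp
      have "j \<noteq> 2*i-1" "j \<noteq> 2*i" using ynu yh unfolding p_def q_def by auto
      then show ?thesis using old[OF jj(1)] yh ynu by simp
    next
      case n
      have i'ne: "i' \<noteq> i" using n ynu unfolding u_def by auto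
      have jr: "2*i' \<in> {1..2*k}" using n by auto
      have jn: "2*i' \<noteq> 2*i-1" "2*i' \<noteq> 2*i" using i'ne i n by auto
      have o2: "P1 (h (2*i')) \<and> P2 (h (2*i'))" using old[OF jr jn] .
      have eF: "{y, h (2*i')} \<in> F" using Enew2[OF n(1)] EF n unfolding h_def by auto
      have hne: "h (2*i') \<noteq> p" "h (2*i') \<noteq> q" using hp[OF jr jn(1)] hq[OF jr jn(2)] .
      have yhne: "y \<noteq> h (2*i')" using n unfolding h_def by simp
      have "inb f u p y = inb f u p (h (2*i'))"
        using nc[OF f' up(1) eF uV pV(1) y(1) hV[OF jr]] up_ne ynu hne hu yhne by metis
      moreover have "inb f u q y = inb f u q (h (2*i'))"
        using nc[OF f' up(2) eF uV pV(2) y(1) hV[OF jr]] up_ne ynu hne hu yhne by metis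
      ultimately show ?thesis using o2 ynu unfolding P1_def P2_def by simp
    qed
  qed
  have c: "inb f u y p = inb f u y q"
    using nc[OF f' uy pqE uV y(1) pV] yP up_ne pq by metis
  have inj: "inj_on f VV" using f' unfolding outerplanar_wrt_def by simp
  have d: "f p \<noteq> f u" "f p \<noteq> f q" "f p \<noteq> f y" "f u \<noteq> f q" "f u \<noteq> f y" "f q \<noteq> f y"
    using inj_onD[OF inj] yP up_ne pq pV uV y(1) by metis+
  show False
    using final_arith[OF d] yP c unfolding P1_def P2_def inb_def by simp
qed


lemma new_nonmax':
  assumes i: "i \<in> {1..k}" and y: "y \<in> VV" "y \<noteq> Inr i" "{Inr i, y} \<notin> EE"
    and o: "outerplanar VV (insert {Inr i, y} EE)"
  shows False
proof -
  have "y \<noteq> Inl (a (2*i-1))" "y \<noteq> Inl (a (2*i))" using Enew1[OF i] Enew2[OF i] y(3) by auto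
  moreover obtain f where "outerplanar_wrt VV (insert {Inr i, y} EE) f" using o unfolding outerplanar_def by blast
  ultimately show False using new_nonmax[OF i y(1,2)] by blast
qed

lemma max_GH: "maximal_outerplanar VV EE"
  unfolding maximal_outerplanar_def
proof (intro conjI op_GH ballI impI)
  fix x y assume xy: "x \<in> VV" "y \<in> VV" "x \<noteq> y \<and> {x, y} \<notin> EE"
  show "\<not> outerplanar VV (insert {x, y} EE)"
  proof
    assume o: "outerplanar VV (insert {x, y} EE)"
    consider (l) b where "b \<in> V" "x = Inl b" | (r) i where "i \<in> {1..k}" "x = Inr i"
      using xy(1) unfolding GH_vertices_def by blast
    then show False
    proof cases
      case l note xb = this
      consider (l2) c where "c \<in> V" "y = Inl c" | (r2) i where "i \<in> {1..k}" "y = Inr i"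
        using xy(2) unfolding GH_vertices_def by blast
      then show False
      proof cases
        case l2 then show False using old_nonmax[of b c] xb xy o by auto
      next
        case r2
        have "{x,y} = {Inr i, x}" using r2 by auto
        then show False using new_nonmax'[OF r2(1) xy(1)] xy o r2 by auto
      qed
    next
      case r
      then show False using new_nonmax'[OF r(1) xy(2)] xy o by auto
    qed
  qed
qed

lemma nb_new: "i \<in> {1..k} \<Longrightarrow> nbhd EE (Inr i) = {Inl (a (2*i-1)), Inl (a (2*i))}"
proof
  assume i: "i \<in> {1..k}"
  show "{Inl (a (2*i-1)), Inl (a (2*i))} \<subseteq> nbhd EE (Inr i)"
    using Enew1[OF i] Enew2[OF i] unfolding nbhd_def by auto
  show "nbhd EE (Inr i) \<subseteq> {Inl (a (2*i-1)), Inl (a (2*i))}"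
  proof
    fix w assume "w \<in> nbhd EE (Inr i)"
    then have "{Inr i, w} \<in> EE" unfolding nbhd_def by simp
    then show "w \<in> {Inl (a (2*i-1)), Inl (a (2*i))}"
      unfolding GH_edges_def by (auto simp: doubleton_eq_iff)
  qed
qed

lemma two_card: "finite S \<Longrightarrow> x \<in> S \<Longrightarrow> y \<in> S \<Longrightarrow> x \<noteq> y \<Longrightarrow> card S \<ge> 2"
  using card_mono[of S "{x,y}"] by auto

definition "nx j = (if j < 2*k then Suc j else 1)"
definition "pv j = (if j > 1 then j - 1 else 2*k)"

lemma nx_props: "j \<in> {1..2*k} \<Longrightarrow> nx j \<in> {1..2*k} \<and> nx j \<noteq> j \<and> {Inl (a j), Inl (a (nx j))} \<in> EE"
proof -
  assume j: "j \<in> {1..2*k}"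
  show ?thesis
  proof (cases "j < 2*k")
    case True then show ?thesis using j cyc1[of j] unfolding nx_def by auto
  next
    case False then have "j = 2*k" using j by auto
    then show ?thesis using k2 cyc2 unfolding nx_def by auto
  qed
qed

lemma pv_props: "j \<in> {1..2*k} \<Longrightarrow> pv j \<in> {1..2*k} \<and> pv j \<noteq> j \<and> pv j \<noteq> nx j \<and> {Inl (a j), Inl (a (pv j))} \<in> EE"
proof -
  assume j: "j \<in> {1..2*k}"
  show ?thesis
  proof (cases "j > 1")
    case True
    have "{Inl (a (j-1)), Inl (a (Suc (j-1)))} \<in> EE" using cyc1[of "j-1"] True j by auto
    then have "{Inl (a j), Inl (a (j-1))} \<in> EE" using True by (simp add: insert_commute)
    then show ?thesis using j True k2 unfolding pv_def nx_def by auto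
  next
    case False then have "j = 1" using j by auto
    then show ?thesis using k2 cyc2 unfolding pv_def nx_def by (auto simp: insert_commute)
  qed
qed

lemma deg_old: "v \<in> V \<Longrightarrow> degree EE (Inl v) \<noteq> 2"
proof -
  assume "v \<in> V"
  then obtain j where j: "j \<in> {1..2*k}" "v = a j" using Vex by blast
  define i where "i = (j+1) div 2"
  have i: "i \<in> {1..k}" "j = 2*i-1 \<or> j = 2*i" using j unfolding i_def by auto
  have e1: "{Inl v, Inr i} \<in> EE" using i Enew1[OF i(1)] Enew2[OF i(1)] j by (auto simp: insert_commute)
  have n: "nx j \<in> {1..2*k}" "nx j \<noteq> j" "{Inl v, Inl (a (nx j))} \<in> EE" using nx_props[OF j(1)] j by auto
  have p: "pv j \<in> {1..2*k}" "pv j \<noteq> j" "pv j \<noteq> nx j" "{Inl v, Inl (a (pv j))} \<in> EE" using pv_props[OF j(1)] j by auto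
  have sub: "{Inr i, Inl (a (nx j)), Inl (a (pv j))} \<subseteq> nbhd EE (Inl v)" using e1 n p unfolding nbhd_def by auto
  have "a (nx j) \<noteq> a (pv j)" using aeq n p by metis
  then have c3: "card {Inr i, Inl (a (nx j)), Inl (a (pv j))} = 3" by simp
  show ?thesis
  proof (cases "finite (nbhd EE (Inl v))")
    case True then show ?thesis using card_mono[OF True sub] c3 unfolding degree_def by simp
  next
    case False then show ?thesis unfolding degree_def by simp
  qed
qed

lemma deg_set: "{v \<in> VV. degree EE v = 2} = Inr ` {1..k}"
proof
  show "{v \<in> VV. degree EE v = 2} \<subseteq> Inr ` {1..k}"
    using deg_old unfolding GH_vertices_def by auto
  show "Inr ` {1..k} \<subseteq> {v \<in> VV. degree EE v = 2}"
  proof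
    fix v :: "'a + nat" assume "v \<in> Inr ` {1..k}"
    then obtain i where i: "i \<in> {1..k}" "v = Inr i" by blast
    have "2*i-1 \<in> {1..2*k}" "2*i \<in> {1..2*k}" "2*i-1 \<noteq> 2*i" using i by auto
    then have "a (2*i-1) \<noteq> a (2*i)" using aeq by blast
    then have "degree EE v = 2" using nb_new[OF i(1)] i(2) unfolding degree_def by simp
    then show "v \<in> {v \<in> VV. degree EE v = 2}" using i unfolding GH_vertices_def by auto
  qed
qed

lemma card_deg: "card {v \<in> VV. degree EE v = 2} = k"
  unfolding deg_set by (simp add: card_image)

lemma dd0: "double_dominating VV EE (Inl ` V)"
  unfolding double_dominating_def
proof (intro conjI ballI)
  show "Inl ` V \<subseteq> VV" unfolding GH_vertices_def by blast
  fix v assume v: "v \<in> VV"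
  have fin: "finite (insert v (nbhd EE v) \<inter> Inl ` V)" using finV by simp
  consider (l) b where "b \<in> V" "v = Inl b" | (r) i where "i \<in> {1..k}" "v = Inr i"
    using v unfolding GH_vertices_def by blast
  then show "2 \<le> card (insert v (nbhd EE v) \<inter> Inl ` V)"
  proof cases
    case l
    then obtain j where j: "j \<in> {1..2*k}" "b = a j" using Vex by blast
    have n: "nx j \<in> {1..2*k}" "nx j \<noteq> j" "{Inl b, Inl (a (nx j))} \<in> EE" using nx_props[OF j(1)] j by auto
    have "a (nx j) \<noteq> b" using aeq n j by metis
    moreover have "Inl (a (nx j)) \<in> insert v (nbhd EE v) \<inter> Inl ` V"
      using n l ainV unfolding nbhd_def by auto
    moreover have "Inl b \<in> insert v (nbhd EE v) \<inter> Inl ` V" using l by auto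
    ultimately show ?thesis using two_card[OF fin] by blast
  next
    case r
    have "2*i-1 \<in> {1..2*k}" "2*i \<in> {1..2*k}" "2*i-1 \<noteq> 2*i" using r by auto
    then have "a (2*i-1) \<noteq> a (2*i)" "a (2*i-1) \<in> V" "a (2*i) \<in> V" using aeq ainV by blast+
    then show ?thesis using two_card[OF fin, of "Inl (a (2*i-1))" "Inl (a (2*i))"] nb_new[OF r(1)] r(2) by auto
  qed
qed

lemma dd_lower: "double_dominating VV EE D \<Longrightarrow> card D \<ge> 2*k"
proof -
  assume dd: "double_dominating VV EE D"
  have DV: "D \<subseteq> VV" using dd unfolding double_dominating_def by simp
  have finD: "finite D" using finite_subset[OF DV finVV] .
  define N where "N i = insert (Inr i) (nbhd EE (Inr i)) \<inter> D" for i
  have N2: "i \<in> {1..k} \<Longrightarrow> card (N i) \<ge> 2" for i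
    using dd unfolding double_dominating_def N_def GH_vertices_def by auto
  have Neq: "i \<in> {1..k} \<Longrightarrow> N i \<subseteq> {Inr i, Inl (a (2*i-1)), Inl (a (2*i))}" for i
    unfolding N_def using nb_new by auto
  have disj: "N i \<inter> N i' = {}" if "i \<in> {1..k}" "i' \<in> {1..k}" "i \<noteq> i'" for i i'
  proof -
    have r: "2*i-1 \<in> {1..2*k}" "2*i \<in> {1..2*k}" "2*i'-1 \<in> {1..2*k}" "2*i' \<in> {1..2*k}" using that by auto
    have "2*i-1 \<noteq> 2*i'-1" "2*i-1 \<noteq> 2*i'" "2*i \<noteq> 2*i'-1" "2*i \<noteq> 2*i'" using that by auto
    then have "a (2*i-1) \<noteq> a (2*i'-1)" "a (2*i-1) \<noteq> a (2*i')" "a (2*i) \<noteq> a (2*i'-1)" "a (2*i) \<noteq> a (2*i')"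
      using aeq r by metis+
    then show ?thesis using Neq[OF that(1)] Neq[OF that(2)] that(3) by blast
  qed
  have "card (\<Union>i\<in>{1..k}. N i) = (\<Sum>i\<in>{1..k}. card (N i))"
    by (rule card_UN_disjoint) (use finD disj in \<open>auto simp: N_def\<close>)
  also have "\<dots> \<ge> (\<Sum>i\<in>{1..k}. 2)" using N2 by (intro sum_mono) auto
  finally have "card (\<Union>i\<in>{1..k}. N i) \<ge> 2*k" by simp
  moreover have "card (\<Union>i\<in>{1..k}. N i) \<le> card D" using finD by (intro card_mono) (auto simp: N_def)
  ultimately show ?thesis by simp
qed

lemma ddn: "double_domination_number VV EE = 2*k"
  unfolding double_domination_number_def
proof (rule Least_equality)
  have "card (Inl ` V :: ('a + nat) set) = 2*k" using cardV by (simp add: card_image)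
  then show "\<exists>D. double_dominating VV EE D \<and> card D = 2*k" using dd0 by blast
  show "\<And>y. \<exists>D. double_dominating VV EE D \<and> card D = y \<Longrightarrow> 2 * k \<le> y" using dd_lower by blast
qed

end

theorem mainTheorem3:
  fixes k :: nat and V :: "'a set" and E :: "'a set set" and a :: "nat \<Rightarrow> 'a"
  assumes "k \<ge> 2"
    and "maximal_outerplanar V E"
    and "inj_on a {1..2*k}" and "a ` {1..2*k} = V"
    and "\<forall>i\<in>{1..<2*k}. {a i, a (Suc i)} \<in> E" and "{a (2*k), a 1} \<in> E"
    and "outerplanar_wrt V E (inv_into {1..2*k} a)"
  shows "maximal_outerplanar (GH_vertices k V) (GH_edges k a E)
    \<and> card (GH_vertices k V) = 3 * k
    \<and> card {v \<in> GH_vertices k V. degree (GH_edges k a E) v = 2} = k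
    \<and> (let n = card (GH_vertices k V);
           t = card {v \<in> GH_vertices k V. degree (GH_edges k a E) v = 2};
           g = double_domination_number (GH_vertices k V) (GH_edges k a E)
       in real g = 2 * real n / 3 \<and> real g = (real n + real t) / 2 \<and> real g = real n - real t)"
proof -
  interpret ghl k V E a using assms by (unfold_locales) auto
  show ?thesis using max_GH cardVV card_deg ddn by (simp add: Let_def)
qed

end
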